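(* Let $(N,m)$ be a marked P/T net and $\mathcal U[N,m]=(O,m')$ its unfolding. Under the identification of a token of colour $(h,i)$ in place $a$ of $\overleftarrow{[\![N]\!]}$ with the place $a(h,i)$ of $O$, of a firing of a forward transition $\mathsf t$ of $\overleftarrow{[\![N]\!]}$ under substitution $\sigma$ with the transition $\mathsf t(H)$ of $\overleftarrow O$ where $H={}^\bullet\mathsf t_{[\![N]\!]}\sigma$, and of a firing of $\underline{\mathsf t}$ under $\sigma$ with $\underline{\mathsf t(H)}$ for the same $H$: for every firing sequence $s$ and marking $m''$, $(\overleftarrow{[\![N]\!]},[\![m]\!])\xrightarrow{s}(\overleftarrow{[\![N]\!]},m'')$ if and only if $(\overleftarrow O,m')\xrightarrow{s}(\overleftarrow O,m'')$.
   Context: A P/T net $N=(S_N,T_N,{}^\bullet\_,\_^\bullet)$ has disjoint sets of places and transitions and nonempty preset/postset multisets ${}^\bullet\mathsf t,\mathsf t^\bullet$ over $S_N$; markings are multisets of places and firing is: if ${}^\bullet\mathsf t=m_1$, $\mathsf t^\bullet=m_2$ then $(N,m_1\oplus m_3)\xrightarrow{\mathsf t}(N,m_2\oplus m_3)$. Unfolding: with $\preceq$ the reflexive-transitive closure of $\{(a,\mathsf t)\mid a\in{}^\bullet\mathsf t\}\cup\{(\mathsf t,a)\mid a\in\mathsf t^\bullet\}$, $x\#y$ iff there are transitions $\mathsf t_1\preceq x$, $\mathsf t_2\preceq y$, $\mathsf t_1\ne\mathsf t_2$, ${}^\bullet\mathsf t_1\cap{}^\bullet\mathsf t_2\ne\emptyset$,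 $x\ co\ y$ iff $x\ne y$, $x\not\preceq y$, $y\not\preceq x$, not $x\#y$, and $CO(X)$ iff elements of $X$ are pairwise $co$ and finitely many transitions lie below $X$, the unfolding $\mathcal U[N,m]$ is the least net with: places $a(\emptyset,i)$ for $1\le i\le m(a)$; a transition $\mathsf t(H)$ with preset $H$ whenever $H=\{a_j(h_j,i_j)\mid j\in J\}$ is a set of its places with $CO(H)$ and ${}^\bullet\mathsf t=\bigoplus_j a_j$; and for each $x=\mathsf t(H)$ the places $a(\{x\},i)$, $1\le i\le\mathsf t^\bullet(a)$, forming its postset. Its initial marking $m'$ is $\{a(\emptyset,i)\mid 1\le i\le m(a)\}$. For any net (coloured or not) $M$, its reversible version $\overleftarrow M$ has the same places and transitions $T_M\cup\{\underline{\mathsf t}\mid\mathsf t\in T_M\}$ with ${}^\bullet\underline{\mathsf t}=\mathsf t^\bullet$ and $\underline{\mathsf t}^\bullet={}^\bullet\mathsf t$. Coloured nets: fix infinite sets $\mathcal X$ of variables and $\mathcal C\supseteq\mathcal X$ of colours, where $\mathcal C$ is the least set containing $\mathcal X$ with $(h,n)\in\mathcal C$ for $h\in 2^{\mathcal C}$, $n\in\mathbb N$, and $x(h)\in\mathcal C$ for $x$ a place or transition name and $h\in 2^{\mathcal C}$. A C-P/T net has places, transitions, and pre/postsets that are multisets over $S\times\mathcal C$ (written $a(c)$); markings are variable-free multisets over $S\times\mathcal C$. Coloured firing: for $\mathsf t=m_1[\rangle m_2$ and a substitution $\sigma:\mathcal X\rightharpoonup\mathcal C$, $(N,m_1\sigma\oplus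 m_3)\xrightarrow{\mathsf t}(N,m_2\sigma\oplus m_3)$. The encoding $[\![N]\!]$ of a P/T net has the same places and transitions, with ${}^\bullet\mathsf t_{[\![N]\!]}=a_1(x_1)\oplus\dots\oplus a_n(x_n)$ for ${}^\bullet\mathsf t_N=a_1\oplus\dots\oplus a_n$ and pairwise distinct variables $x_i$, and $\mathsf t^\bullet_{[\![N]\!]}=\{a(\{\mathsf t(h)\},i)\mid a\in\mathrm{supp}(\mathsf t^\bullet_N),\ 1\le i\le\mathsf t^\bullet_N(a),\ h={}^\bullet\mathsf t_{[\![N]\!]}\}$ (token in place $a$ with colour $(\{\mathsf t(h)\},i)$); the variables of pre- and postsets of each transition coincide. The encoded initial marking is $[\![m]\!]=\{a(\emptyset,i)\mid a\in\mathrm{supp}(m),\ 1\le i\le m(a)\}$. The reversible version of the marked P/T net $(N,m)$ is the marked C-P/T net $(\overleftarrow{[\![N]\!]},[\![m]\!])$. *)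

theory Defs
  imports Main "HOL-Library.Multiset" "HOL-Library.FSet"
begin

text \<open>A place name applied to a colour, a(c), is represented as the pair (a,c);
  hence the colour t(H) carries a finite set of such pairs.\<close>

datatype ('s, 't) col =
    CVar nat
  | CPair "('s, 't) col fset" nat
  | CTr 't "('s \<times> ('s, 't) col) fset"

primrec subst :: "(nat \<Rightarrow> ('s, 't) col option) \<Rightarrow> ('s, 't) col \<Rightarrow> ('s, 't) col" where
  "subst \<sigma> (CVar x) = (case \<sigma> x of None \<Rightarrow> CVar x | Some c \<Rightarrow> c)"
| "subst \<sigma> (CPair h n) = CPair (fimage (subst \<sigma>) h) n"
| "subst \<sigma> (CTr t h) = CTr t (fimage (map_prod id (subst \<sigma>)) h)"

primrec cvars :: "('s, 't) col \<Rightarrow> nat set" where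
  "cvars (CVar x) = {x}"
| "cvars (CPair h n) = \<Union> (fset (fimage cvars h))"
| "cvars (CTr t h) = \<Union> (snd ` fset (fimage (map_prod id cvars) h))"

definition msubst :: "(nat \<Rightarrow> ('s, 't) col option) \<Rightarrow> ('s \<times> ('s, 't) col) multiset
    \<Rightarrow> ('s \<times> ('s, 't) col) multiset" where
  "msubst \<sigma> M = image_mset (map_prod id (subst \<sigma>)) M"

definition ground :: "('s \<times> ('s, 't) col) multiset \<Rightarrow> bool" where
  "ground M \<longleftrightarrow> (\<forall>(a, c) \<in> set_mset M. cvars c = {})"

definition mset_to_fset :: "'a multiset \<Rightarrow> 'a fset" where
  "mset_to_fset M = Abs_fset (set_mset M)"

record ('p, 'u) ptnet =
  places :: "'p set"
  trans :: "'u set"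
  pre :: "'u \<Rightarrow> 'p multiset"
  post :: "'u \<Rightarrow> 'p multiset"

definition wf_ptnet :: "('p, 'u) ptnet \<Rightarrow> bool" where
  "wf_ptnet N \<longleftrightarrow> (\<forall>t \<in> trans N. pre N t \<noteq> {#} \<and> post N t \<noteq> {#}
      \<and> set_mset (pre N t) \<subseteq> places N \<and> set_mset (post N t) \<subseteq> places N)"

definition marking_of :: "('p, 'u) ptnet \<Rightarrow> 'p multiset \<Rightarrow> bool" where
  "marking_of N m \<longleftrightarrow> set_mset m \<subseteq> places N"

definition ptfire :: "('p, 'u) ptnet \<Rightarrow> 'p multiset \<Rightarrow> 'u \<Rightarrow> 'p multiset \<Rightarrow> bool" where
  "ptfire N M t M' \<longleftrightarrow> t \<in> trans N \<and> (\<exists>m3. M = pre N t + m3 \<and> M' = post N t + m3)"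

inductive ptreach :: "('p, 'u) ptnet \<Rightarrow> 'p multiset \<Rightarrow> 'u list \<Rightarrow> 'p multiset \<Rightarrow> bool"
  for N where
  refl: "ptreach N M [] M"
| step: "ptreach N M s M1 \<Longrightarrow> ptfire N M1 t M2 \<Longrightarrow> ptreach N M (s @ [t]) M2"

text \<open>Fwd t is t, Bwd t is the reverse transition underline t.\<close>
datatype 'u rt = Fwd 'u | Bwd 'u

definition rev_ptnet :: "('p, 'u) ptnet \<Rightarrow> ('p, 'u rt) ptnet" where
  "rev_ptnet N = \<lparr> places = places N,
     trans = Fwd ` trans N \<union> Bwd ` trans N,
     pre = (\<lambda>u. case u of Fwd t \<Rightarrow> pre N t | Bwd t \<Rightarrow> post N t),
     post = (\<lambda>u. case u of Fwd t \<Rightarrow> post N t | Bwd t \<Rightarrow> pre N t) \<rparr>"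

record ('s, 't, 'u) cnet =
  cplaces :: "'s set"
  ctrans :: "'u set"
  cpre :: "'u \<Rightarrow> ('s \<times> ('s, 't) col) multiset"
  cpost :: "'u \<Rightarrow> ('s \<times> ('s, 't) col) multiset"

definition rev_cnet :: "('s, 't, 'u) cnet \<Rightarrow> ('s, 't, 'u rt) cnet" where
  "rev_cnet C = \<lparr> cplaces = cplaces C,
     ctrans = Fwd ` ctrans C \<union> Bwd ` ctrans C,
     cpre = (\<lambda>u. case u of Fwd t \<Rightarrow> cpre C t | Bwd t \<Rightarrow> cpost C t),
     cpost = (\<lambda>u. case u of Fwd t \<Rightarrow> cpost C t | Bwd t \<Rightarrow> cpre C t) \<rparr>"

definition cfire :: "('s, 't, 'u) cnet \<Rightarrow> ('s \<times> ('s, 't) col) multiset \<Rightarrow> 'u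
    \<Rightarrow> (nat \<Rightarrow> ('s, 't) col option) \<Rightarrow> ('s \<times> ('s, 't) col) multiset \<Rightarrow> bool" where
  "cfire C M t \<sigma> M' \<longleftrightarrow> t \<in> ctrans C \<and> ground M \<and> ground M' \<and>
     (\<exists>m3. M = msubst \<sigma> (cpre C t) + m3 \<and> M' = msubst \<sigma> (cpost C t) + m3)"

definition post_col :: "('s, 't) ptnet \<Rightarrow> 't \<Rightarrow> ('s \<times> ('s, 't) col) fset
    \<Rightarrow> ('s \<times> ('s, 't) col) multiset" where
  "post_col N t h = mset_set {(a, CPair {|CTr t h|} i) | a i. 1 \<le> i \<and> i \<le> count (post N t) a}"

definition valid_vars :: "('s, 't) ptnet \<Rightarrow> ('t \<Rightarrow> ('s \<times> nat) multiset) \<Rightarrow> bool" where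
  "valid_vars N vs \<longleftrightarrow> (\<forall>t \<in> trans N. image_mset fst (vs t) = pre N t
      \<and> (\<forall>x. count (image_mset snd (vs t)) x \<le> 1))"

definition enc_pre :: "('t \<Rightarrow> ('s \<times> nat) multiset) \<Rightarrow> 't \<Rightarrow> ('s \<times> ('s, 't) col) multiset" where
  "enc_pre vs t = image_mset (\<lambda>(a, x). (a, CVar x)) (vs t)"

definition enc :: "('s, 't) ptnet \<Rightarrow> ('t \<Rightarrow> ('s \<times> nat) multiset) \<Rightarrow> ('s, 't, 't) cnet" where
  "enc N vs = \<lparr> cplaces = places N, ctrans = trans N,
     cpre = enc_pre vs,
     cpost = (\<lambda>t. post_col N t (mset_to_fset (enc_pre vs t))) \<rparr>"

definition enc_marking :: "'s multiset \<Rightarrow> ('s \<times> ('s, 't) col) multiset" where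
  "enc_marking m = mset_set {(a, CPair {||} i) | a i. 1 \<le> i \<and> i \<le> count m a}"

text \<open>Places of the unfolding are pairs (a, c) (place a(h,i) is (a, CPair h i));
  transitions are pairs (t, H) (transition t(H)).  Nodes are either.\<close>
type_synonym ('s, 't) uplace = "'s \<times> ('s, 't) col"
type_synonym ('s, 't) utrans = "'t \<times> ('s, 't) uplace fset"
type_synonym ('s, 't) unode = "('s, 't) uplace + ('s, 't) utrans"

definition uflow :: "('s, 't) ptnet \<Rightarrow> (('s, 't) unode \<times> ('s, 't) unode) set" where
  "uflow N = {(Inl p, Inr (t, H)) | p t H. p |\<in>| H}
     \<union> {(Inr (t, H), Inl (a, CPair {|CTr t H|} i)) | t H a i. 1 \<le> i \<and> i \<le> count (post N t) a}"

definition ule :: "('s, 't) ptnet \<Rightarrow> ('s, 't) unode \<Rightarrow> ('s, 't) unode \<Rightarrow> bool" where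
  "ule N x y \<longleftrightarrow> (x, y) \<in> (uflow N)\<^sup>*"

definition uconfl :: "('s, 't) ptnet \<Rightarrow> ('s, 't) unode \<Rightarrow> ('s, 't) unode \<Rightarrow> bool" where
  "uconfl N x y \<longleftrightarrow> (\<exists>t1 H1 t2 H2. ule N (Inr (t1, H1)) x \<and> ule N (Inr (t2, H2)) y
      \<and> (t1, H1) \<noteq> (t2, H2) \<and> H1 |\<inter>| H2 \<noteq> {||})"

definition uco :: "('s, 't) ptnet \<Rightarrow> ('s, 't) unode \<Rightarrow> ('s, 't) unode \<Rightarrow> bool" where
  "uco N x y \<longleftrightarrow> x \<noteq> y \<and> \<not> ule N x y \<and> \<not> ule N y x \<and> \<not> uconfl N x y"

definition UCO :: "('s, 't) ptnet \<Rightarrow> ('s, 't) unode set \<Rightarrow> bool" where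
  "UCO N X \<longleftrightarrow> (\<forall>x \<in> X. \<forall>y \<in> X. x \<noteq> y \<longrightarrow> uco N x y)
      \<and> finite {u. \<exists>x \<in> X. ule N (Inr u) x}"

inductive_set
  uplaces :: "('s, 't) ptnet \<Rightarrow> 's multiset \<Rightarrow> ('s, 't) uplace set"
  and utransitions :: "('s, 't) ptnet \<Rightarrow> 's multiset \<Rightarrow> ('s, 't) utrans set"
  for N m where
  init: "1 \<le> i \<Longrightarrow> i \<le> count m a \<Longrightarrow> (a, CPair {||} i) \<in> uplaces N m"
| trn: "t \<in> trans N \<Longrightarrow> (\<forall>p \<in> fset H. p \<in> uplaces N m) \<Longrightarrow> UCO N (Inl ` fset H)
        \<Longrightarrow> image_mset fst (mset_set (fset H)) = pre N t \<Longrightarrow> (t, H) \<in> utransitions N m"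
| pst: "(t, H) \<in> utransitions N m \<Longrightarrow> 1 \<le> i \<Longrightarrow> i \<le> count (post N t) a
        \<Longrightarrow> (a, CPair {|CTr t H|} i) \<in> uplaces N m"

definition unfold_net :: "('s, 't) ptnet \<Rightarrow> 's multiset \<Rightarrow> (('s, 't) uplace, ('s, 't) utrans) ptnet" where
  "unfold_net N m = \<lparr> places = uplaces N m, trans = utransitions N m,
     pre = (\<lambda>(t, H). mset_set (fset H)),
     post = (\<lambda>(t, H). post_col N t H) \<rparr>"

definition unfold_marking :: "'s multiset \<Rightarrow> ('s, 't) uplace multiset" where
  "unfold_marking m = enc_marking m"

text \<open>A firing of t (resp. underline t) under \<sigma> is identified with t(H) (resp.
  underline t(H)) where H is the preset of t in the encoding, instantiated by \<sigma>.\<close>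
definition clabel :: "('s, 't, 't) cnet \<Rightarrow> 't rt \<Rightarrow> (nat \<Rightarrow> ('s, 't) col option)
    \<Rightarrow> ('s, 't) utrans rt" where
  "clabel C u \<sigma> = (case u of
      Fwd t \<Rightarrow> Fwd (t, mset_to_fset (msubst \<sigma> (cpre C t)))
    | Bwd t \<Rightarrow> Bwd (t, mset_to_fset (msubst \<sigma> (cpre C t))))"

inductive creach :: "('s, 't, 't) cnet \<Rightarrow> ('s \<times> ('s, 't) col) multiset
    \<Rightarrow> ('s, 't) utrans rt list \<Rightarrow> ('s \<times> ('s, 't) col) multiset \<Rightarrow> bool"
  for C where
  refl: "creach C M [] M"
| step: "creach C M s M1 \<Longrightarrow> cfire (rev_cnet C) M1 u \<sigma> M2
         \<Longrightarrow> creach C M (s @ [clabel C u \<sigma>]) M2"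

end

theory Submission
  imports Defs
begin

definition initS :: "'s multiset \<Rightarrow> ('s,'t) uplace set" where
  "initS m = {(a, CPair {||} i) | a i. 1 \<le> i \<and> i \<le> count m a}"
definition postS :: "('s,'t) ptnet \<Rightarrow> 't \<Rightarrow> ('s,'t) uplace fset \<Rightarrow> ('s,'t) uplace set" where
  "postS N t H = {(a, CPair {|CTr t H|} i) | a i. 1 \<le> i \<and> i \<le> count (post N t) a}"

lemma post_col_eq: "post_col N t H = mset_set (postS N t H)"
  by (simp add: post_col_def postS_def)
lemma enc_marking_eq: "enc_marking m = mset_set (initS m)"
  by (simp add: enc_marking_def initS_def)

lemma finite_initS: "finite (initS m)"
proof -
  have "initS m \<subseteq> (\<lambda>(a,i). (a, CPair {||} i)) ` (SIGMA a:set_mset m. {1..count m a})"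
    by (auto simp: initS_def image_iff intro!: count_inI)
  thus ?thesis by (rule finite_subset) auto
qed

lemma finite_postS: "finite (postS N t H)"
proof -
  have "postS N t H \<subseteq> (\<lambda>(a,i). (a, CPair {|CTr t H|} i)) ` (SIGMA a:set_mset (post N t). {1..count (post N t) a})"
    by (auto simp: postS_def image_iff intro!: count_inI)
  thus ?thesis by (rule finite_subset) auto
qed

definition prodS where "prodS N m C = initS m \<union> (\<Union>u\<in>C. postS N (fst u) (snd u))"
definition consS where "consS C = (\<Union>u\<in>C. fset (snd u))"
definition cutS where "cutS N m C = prodS N m C - consS C"

definition Inv where
  "Inv N m M C \<longleftrightarrow> finite C \<and> C \<subseteq> utransitions N m
    \<and> (\<forall>u\<in>C. \<forall>v\<in>C. u \<noteq> v \<longrightarrow> fset (snd u) \<inter> fset (snd v) = {})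
    \<and> consS C \<subseteq> prodS N m C \<and> M = mset_set (cutS N m C)"

lemma finite_prodS: "finite C \<Longrightarrow> finite (prodS N m C)"
  by (auto simp: prodS_def finite_initS finite_postS)
lemma finite_cutS: "finite C \<Longrightarrow> finite (cutS N m C)"
  by (simp add: cutS_def finite_prodS)

lemma postS_in_prodS: "p \<in> postS N t H \<Longrightarrow> p \<in> prodS N m C \<Longrightarrow> (t,H) \<in> C"
  by (auto simp: postS_def prodS_def initS_def)

lemma postS_prodS_disj: "(t,H) \<notin> C \<Longrightarrow> postS N t H \<inter> prodS N m C = {}"
  using postS_in_prodS[of _ N t H m C] by blast

lemma Inv_init: "Inv N m (enc_marking m) {}"
  by (simp add: Inv_def enc_marking_eq cutS_def prodS_def consS_def)

lemma pre_nonempty: "(t,H) \<in> utransitions N m \<Longrightarrow> wf_ptnet N \<Longrightarrow> \<exists>p. p |\<in>| H"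
proof -
  assume a: "(t,H) \<in> utransitions N m" and w: "wf_ptnet N"
  from a have t: "t \<in> trans N" and e: "image_mset fst (mset_set (fset H)) = pre N t"
    by (auto elim: utransitions.cases)
  from w t have "pre N t \<noteq> {#}" by (simp add: wf_ptnet_def)
  with e have "fset H \<noteq> {}" by auto
  thus ?thesis by auto
qed

lemma utrans_trans: "(t,H) \<in> utransitions N m \<Longrightarrow> t \<in> trans N"
  by (auto elim: utransitions.cases)

lemma postS_nonempty: "t \<in> trans N \<Longrightarrow> wf_ptnet N \<Longrightarrow> postS N t H \<noteq> {}"
proof -
  assume t: "t \<in> trans N" and w: "wf_ptnet N"
  then have "post N t \<noteq> {#}" by (simp add: wf_ptnet_def)
  then obtain a where "a \<in># post N t" by blast
  then have "(a, CPair {|CTr t H|} 1) \<in> postS N t H"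
    by (auto simp: postS_def)
  thus ?thesis by blast
qed

lemma Inv_bwd_in: 
  assumes "Inv N m M C" "t \<in> trans N" "wf_ptnet N" "post_col N t H \<subseteq># M"
  shows "(t,H) \<in> C"
proof -
  obtain p where p: "p \<in> postS N t H" using postS_nonempty[OF assms(2,3)] by blast
  have "set_mset (post_col N t H) \<subseteq> set_mset M" using assms(4) by (rule set_mset_mono)
  with p have "p \<in> cutS N m C" using assms(1) 
    by (auto simp: post_col_eq finite_postS Inv_def finite_cutS)
  hence "p \<in> prodS N m C" by (simp add: cutS_def)
  with p show ?thesis by (rule postS_in_prodS)
qed

lemma prodS_insert: "prodS N m (insert (t,H) C) = prodS N m C \<union> postS N t H"
  by (auto simp: prodS_def)
lemma consS_insert: "consS (insert (t,H) C) = consS C \<union> fset H"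
  by (auto simp: consS_def)

lemma Inv_fwd:
  assumes I: "Inv N m M1 C" and w: "wf_ptnet N" and tH: "(t,H) \<in> utransitions N m"
    and M1: "M1 = mset_set (fset H) + m3" and M2: "M2 = post_col N t H + m3"
  shows "Inv N m M2 (insert (t,H) C)"
proof -
  have fin: "finite C" and sub: "C \<subseteq> utransitions N m"
    and dj: "\<forall>u\<in>C. \<forall>v\<in>C. u \<noteq> v \<longrightarrow> fset (snd u) \<inter> fset (snd v) = {}"
    and cp: "consS C \<subseteq> prodS N m C" and Mc: "M1 = mset_set (cutS N m C)"
    using I by (auto simp: Inv_def)
  have fc: "finite (cutS N m C)" using fin by (rule finite_cutS)
  have "set_mset (mset_set (fset H)) \<subseteq> set_mset M1" using M1 by auto
  hence Hsub: "fset H \<subseteq> cutS N m C" using Mc fc by simp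
  obtain p where p: "p |\<in>| H" using pre_nonempty[OF tH w] by blast
  have notin: "(t,H) \<notin> C"
  proof
    assume "(t,H) \<in> C"
    hence "p \<in> consS C" using p by (force simp: consS_def)
    moreover have "p \<in> cutS N m C" using p Hsub by auto
    ultimately show False by (simp add: cutS_def)
  qed
  have disjP: "postS N t H \<inter> prodS N m C = {}" using notin by (rule postS_prodS_disj)
  have "m3 = mset_set (cutS N m C) - mset_set (fset H)"
    using M1 Mc by (metis add_diff_cancel_left')
  hence m3: "m3 = mset_set (cutS N m C - fset H)"
    by (simp add: mset_set_Diff[OF fc Hsub])
  have cutsub: "cutS N m C \<subseteq> prodS N m C" by (auto simp: cutS_def)
  have cut': "cutS N m (insert (t,H) C) = postS N t H \<union> (cutS N m C - fset H)"
    using disjP Hsub cp cutsub unfolding cutS_def prodS_insert consS_insert by blast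
  have dP: "postS N t H \<inter> (cutS N m C - fset H) = {}" using disjP cutsub by blast
  have "M2 = mset_set (postS N t H) + mset_set (cutS N m C - fset H)"
    using M2 m3 by (simp add: post_col_eq)
  also have "\<dots> = mset_set (postS N t H \<union> (cutS N m C - fset H))"
    using fc dP by (simp add: mset_set_Union finite_postS)
  finally have "M2 = mset_set (postS N t H \<union> (cutS N m C - fset H))" .
  hence M2': "M2 = mset_set (cutS N m (insert (t,H) C))" using cut' by simp
  have dj': "\<forall>u\<in>insert (t,H) C. \<forall>v\<in>insert (t,H) C. u \<noteq> v \<longrightarrow> fset (snd u) \<inter> fset (snd v) = {}"
  proof (intro ballI impI)
    fix u v assume u: "u \<in> insert (t,H) C" and v: "v \<in> insert (t,H) C" and uv: "u \<noteq> v"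
    have HC: "fset H \<inter> consS C = {}" using Hsub unfolding cutS_def by blast
    have cs: "fset (snd w) \<subseteq> consS C" if "w \<in> C" for w using that unfolding consS_def by blast
    show "fset (snd u) \<inter> fset (snd v) = {}"
    proof (cases "u = (t,H)")
      case True
      hence "v \<in> C" using v uv by blast
      thus ?thesis using True HC cs[of v] by auto
    next
      case False
      hence uC: "u \<in> C" using u by blast
      show ?thesis
      proof (cases "v = (t,H)")
        case True
        thus ?thesis using uC HC cs[of u] by auto
      next
        case False
        hence "v \<in> C" using v by blast
        thus ?thesis using uC dj uv by blast
      qed
    qed
  qed
  have cp': "consS (insert (t,H) C) \<subseteq> prodS N m (insert (t,H) C)"
    using cp Hsub unfolding prodS_insert consS_insert cutS_def by blast
  show ?thesis using fin sub tH dj' cp' M2' by (simp add: Inv_def)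
qed

lemma Inv_bwd:
  assumes I: "Inv N m M1 C" and w: "wf_ptnet N" and tH: "(t,H) \<in> utransitions N m"
    and M1: "M1 = post_col N t H + m3" and M2: "M2 = mset_set (fset H) + m3"
  shows "Inv N m M2 (C - {(t,H)})"
proof -
  have fin: "finite C" and sub: "C \<subseteq> utransitions N m"
    and dj: "\<forall>u\<in>C. \<forall>v\<in>C. u \<noteq> v \<longrightarrow> fset (snd u) \<inter> fset (snd v) = {}"
    and cp: "consS C \<subseteq> prodS N m C" and Mc: "M1 = mset_set (cutS N m C)"
    using I by (auto simp: Inv_def)
  have fc: "finite (cutS N m C)" using fin by (rule finite_cutS)
  have inC: "(t,H) \<in> C" using Inv_bwd_in[OF I utrans_trans[OF tH] w] M1 by simp
  define C' where "C' = C - {(t,H)}"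
  have CC: "C = insert (t,H) C'" using inC by (auto simp: C'_def)
  have pC: "prodS N m C = prodS N m C' \<union> postS N t H" using CC prodS_insert by metis
  have cC: "consS C = consS C' \<union> fset H" using CC consS_insert by metis
  have disjP: "postS N t H \<inter> prodS N m C' = {}" by (rule postS_prodS_disj) (simp add: C'_def)
  have "set_mset (post_col N t H) \<subseteq> set_mset M1" using M1 by auto
  hence Psub: "postS N t H \<subseteq> cutS N m C" using Mc fc by (simp add: post_col_eq finite_postS)
  have Hdj: "fset H \<inter> consS C' = {}"
    using dj inC unfolding C'_def consS_def by fastforce
  have Hprod: "fset H \<subseteq> prodS N m C" using cp cC by blast
  have m3: "m3 = mset_set (cutS N m C - postS N t H)"
    using M1 Mc by (simp add: mset_set_Diff[OF fc Psub] post_col_eq)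
  have cut': "cutS N m C' = fset H \<union> (cutS N m C - postS N t H)"
    using disjP Psub Hdj Hprod cp pC cC unfolding cutS_def by blast
  have "M2 = mset_set (fset H \<union> (cutS N m C - postS N t H))"
    using M2 m3 fc cC
    by (subst mset_set_Union) (auto simp: cutS_def)
  hence M2': "M2 = mset_set (cutS N m C')" using cut' by simp
  have cp': "consS C' \<subseteq> prodS N m C'"
    using cp Psub pC cC unfolding cutS_def by blast
  have dj': "\<forall>u\<in>C'. \<forall>v\<in>C'. u \<noteq> v \<longrightarrow> fset (snd u) \<inter> fset (snd v) = {}"
    using dj by (auto simp: C'_def)
  have "finite C'" "C' \<subseteq> utransitions N m" using fin sub by (auto simp: C'_def)
  thus ?thesis using dj' cp' M2' by (simp add: Inv_def C'_def[symmetric])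
qed

lemma rev_unf_simps:
  "trans (rev_ptnet (unfold_net N m)) = Fwd ` utransitions N m \<union> Bwd ` utransitions N m"
  "pre (rev_ptnet (unfold_net N m)) (Fwd (t,H)) = mset_set (fset H)"
  "post (rev_ptnet (unfold_net N m)) (Fwd (t,H)) = post_col N t H"
  "pre (rev_ptnet (unfold_net N m)) (Bwd (t,H)) = post_col N t H"
  "post (rev_ptnet (unfold_net N m)) (Bwd (t,H)) = mset_set (fset H)"
  by (simp_all add: rev_ptnet_def unfold_net_def)

lemma Inv_step:
  assumes I: "Inv N m M1 C" and w: "wf_ptnet N"
    and f: "ptfire (rev_ptnet (unfold_net N m)) M1 v M2"
  shows "\<exists>C'. Inv N m M2 C'"
proof -
  from f obtain m3 where tr: "v \<in> Fwd ` utransitions N m \<union> Bwd ` utransitions N m"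
    and e1: "M1 = pre (rev_ptnet (unfold_net N m)) v + m3"
    and e2: "M2 = post (rev_ptnet (unfold_net N m)) v + m3"
    unfolding ptfire_def rev_unf_simps by blast
  from tr show ?thesis
  proof
    assume "v \<in> Fwd ` utransitions N m"
    then obtain t H where v: "v = Fwd (t,H)" and tH: "(t,H) \<in> utransitions N m" by auto
    have "M1 = mset_set (fset H) + m3" "M2 = post_col N t H + m3"
      using e1 e2 unfolding v rev_unf_simps by simp_all
    thus ?thesis using Inv_fwd[OF I w tH] by blast
  next
    assume "v \<in> Bwd ` utransitions N m"
    then obtain t H where v: "v = Bwd (t,H)" and tH: "(t,H) \<in> utransitions N m" by auto
    have "M1 = post_col N t H + m3" "M2 = mset_set (fset H) + m3"
      using e1 e2 unfolding v rev_unf_simps by simp_all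
    thus ?thesis using Inv_bwd[OF I w tH] by blast
  qed
qed

lemma hist:
  assumes "ule N z w" and "w \<in> Inl ` prodS N m C \<union> Inr ` C" and cp: "consS C \<subseteq> prodS N m C"
  shows "z \<in> Inl ` prodS N m C \<union> Inr ` C \<and> (\<forall>p. z = Inl p \<and> z \<noteq> w \<longrightarrow> p \<in> consS C)"
  using assms(1) unfolding ule_def
proof (induction rule: converse_rtrancl_induct)
  case base
  then show ?case using assms(2) by blast
next
  case (step y z)
  from step.hyps(1) have "(y,z) \<in> {(Inl p, Inr (t, H)) | p t H. p |\<in>| H}
     \<union> {(Inr (t, H), Inl (a, CPair {|CTr t H|} i)) | t H a i. 1 \<le> i \<and> i \<le> count (post N t) a}"
    by (simp add: uflow_def)
  then show ?case
  proof (elim UnE)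
    assume "(y,z) \<in> {(Inl p, Inr (t, H)) | p t H. p |\<in>| H}"
    then obtain p t H where e: "y = Inl p" "z = Inr (t,H)" "p |\<in>| H" by blast
    with step.IH have "(t,H) \<in> C" by auto
    hence "p \<in> consS C" using e(3) by (force simp: consS_def)
    thus ?thesis using e cp by auto
  next
    assume "(y,z) \<in> {(Inr (t, H), Inl (a, CPair {|CTr t H|} i)) | t H a i. 1 \<le> i \<and> i \<le> count (post N t) a}"
    then obtain t H a i where e: "y = Inr (t,H)" "z = Inl (a, CPair {|CTr t H|} i)"
      "1 \<le> i" "i \<le> count (post N t) a" by blast
    have "(a, CPair {|CTr t H|} i) \<in> postS N t H" using e by (auto simp: postS_def)
    moreover have "(a, CPair {|CTr t H|} i) \<in> prodS N m C" using step.IH e by auto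
    ultimately have "(t,H) \<in> C" by (rule postS_in_prodS)
    thus ?thesis using e by auto
  qed
qed

lemma cut_co:
  assumes I: "Inv N m M C" and X: "X \<subseteq> cutS N m C"
  shows "UCO N (Inl ` X)"
proof -
  have fin: "finite C" and cp: "consS C \<subseteq> prodS N m C"
    and dj: "\<forall>u\<in>C. \<forall>v\<in>C. u \<noteq> v \<longrightarrow> fset (snd u) \<inter> fset (snd v) = {}"
    using I by (auto simp: Inv_def)
  have D: "\<And>x. x \<in> X \<Longrightarrow> Inl x \<in> Inl ` prodS N m C \<union> Inr ` C" using X by (auto simp: cutS_def)
  have nc: "\<And>x. x \<in> X \<Longrightarrow> x \<notin> consS C" using X by (auto simp: cutS_def)
  have tr: "u \<in> C" if "x \<in> X" "ule N (Inr u) (Inl x)" for u x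
  proof -
    have "Inr u \<in> Inl ` prodS N m C \<union> Inr ` C" using hist[OF that(2) D[OF that(1)] cp] by (rule conjunct1)
    thus ?thesis by auto
  qed
  have pl: "p \<in> consS C" if "x \<in> X" "ule N (Inl p) (Inl x)" "p \<noteq> x" for p x
  proof -
    from conjunct2[OF hist[OF that(2) D[OF that(1)] cp]] that(3) show ?thesis by blast
  qed
  have co: "uco N (Inl x) (Inl y)" if xy: "x \<in> X" "y \<in> X" "x \<noteq> y" for x y
  proof -
    have "\<not> ule N (Inl x) (Inl y)" using pl[OF xy(2), of x] nc[OF xy(1)] xy(3) by blast
    moreover have "\<not> ule N (Inl y) (Inl x)" using pl[OF xy(1), of y] nc[OF xy(2)] xy(3) by blast
    moreover have "\<not> uconfl N (Inl x) (Inl y)"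
    proof
      assume "uconfl N (Inl x) (Inl y)"
      then obtain t1 H1 t2 H2 where c: "ule N (Inr (t1, H1)) (Inl x)" "ule N (Inr (t2, H2)) (Inl y)"
        "(t1, H1) \<noteq> (t2, H2)" "H1 |\<inter>| H2 \<noteq> {||}" unfolding uconfl_def by blast
      have C1: "(t1,H1) \<in> C" using tr[OF xy(1) c(1)] .
      have C2: "(t2,H2) \<in> C" using tr[OF xy(2) c(2)] .
      have "fset H1 \<inter> fset H2 = {}" using dj[rule_format, OF C1 C2 c(3)] by simp
      with c(4) show False by (metis bot_fset.rep_eq fset_inject inf_fset.rep_eq)
    qed
    ultimately show ?thesis using xy(3) by (simp add: uco_def)
  qed
  have "{u. \<exists>x \<in> Inl ` X. ule N (Inr u) x} \<subseteq> C" using tr by auto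
  hence "finite {u. \<exists>x \<in> Inl ` X. ule N (Inr u) x}" using fin by (rule finite_subset)
  thus ?thesis using co by (auto simp: UCO_def)
qed

lemma uplaces_ground: "p \<in> uplaces N m \<Longrightarrow> cvars (snd p) = {}"
proof (induction p rule: uplaces_utransitions.inducts(1)[where ?P2.0="\<lambda>t H. \<forall>p\<in>fset H. cvars (snd p) = {}"])
  case (init i a) then show ?case by simp
next
  case (trn t H) then show ?case by auto
next
  case (pst t H i a) then show ?case by force
qed

lemma Inv_ground: "Inv N m M C \<Longrightarrow> ground M"
proof -
  assume I: "Inv N m M C"
  hence fin: "finite C" and sub: "C \<subseteq> utransitions N m" and M: "M = mset_set (cutS N m C)"
    by (auto simp: Inv_def)
  have "initS m \<subseteq> uplaces N m" by (auto simp: initS_def intro: uplaces_utransitions.init)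
  moreover have "postS N t H \<subseteq> uplaces N m" if "(t,H) \<in> C" for t H
    using sub that by (auto simp: postS_def intro: uplaces_utransitions.pst)
  ultimately have "cutS N m C \<subseteq> uplaces N m" by (force simp: cutS_def prodS_def)
  thus ?thesis using M finite_cutS[OF fin] uplaces_ground by (fastforce simp: ground_def)
qed

lemma Inv_uplaces: "Inv N m M C \<Longrightarrow> cutS N m C \<subseteq> uplaces N m"
proof -
  assume I: "Inv N m M C"
  hence fin: "finite C" and sub: "C \<subseteq> utransitions N m"
    by (auto simp: Inv_def)
  have "initS m \<subseteq> uplaces N m" by (auto simp: initS_def intro: uplaces_utransitions.init)
  moreover have "postS N t H \<subseteq> uplaces N m" if "(t,H) \<in> C" for t H
    using sub that by (auto simp: postS_def intro: uplaces_utransitions.pst)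
  ultimately show "cutS N m C \<subseteq> uplaces N m" by (force simp: cutS_def prodS_def)
qed

lemma msubst_enc_pre: "msubst \<sigma> (enc_pre vs t) = image_mset (\<lambda>(a,x). (a, subst \<sigma> (CVar x))) (vs t)"
  by (auto simp: msubst_def enc_pre_def multiset.map_comp intro!: image_mset_cong)

lemma fset_mset_to_fset[simp]: "fset (mset_to_fset M) = set_mset M"
  by (simp add: mset_to_fset_def Abs_fset_inverse)

lemma mset_to_fset_msubst: "mset_to_fset (msubst \<sigma> M) = map_prod id (subst \<sigma>) |`| mset_to_fset M"
  by (metis fset_inject fset_mset_to_fset fimage.rep_eq msubst_def set_image_mset)

lemma mset_to_fset_mset_set: "mset_to_fset (mset_set (fset H)) = H"
  by (simp add: mset_to_fset_def fset_inverse)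

lemma postS_image: "map_prod id (subst \<sigma>) ` postS N t h = postS N t (map_prod id (subst \<sigma>) |`| h)"
  apply (auto simp: postS_def image_iff)
  subgoal for a i by (rule exI[of _ "CPair {|CTr t h|} i"]) auto
  done

lemma msubst_post_col: "msubst \<sigma> (post_col N t h) = post_col N t (map_prod id (subst \<sigma>) |`| h)"
proof -
  have "inj_on (map_prod id (subst \<sigma>)) (postS N t h)"
    by (auto simp: inj_on_def postS_def)
  thus ?thesis by (simp add: msubst_def post_col_eq image_mset_mset_set postS_image)
qed

lemma sub_set_mset: "A \<subseteq># mset_set S \<Longrightarrow> finite S \<Longrightarrow> A = mset_set (set_mset A)"
proof -
  assume a: "A \<subseteq># mset_set S" "finite S"
  show ?thesis
  proof (rule multiset_eqI)
    fix x
    have "count A x \<le> count (mset_set S) x" using a(1) by (rule mset_subset_eq_count)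
    also have "\<dots> \<le> 1" using a(2) by (cases "x \<in> S") (auto simp: count_mset_set)
    finally have c: "count A x \<le> 1" .
    show "count A x = count (mset_set (set_mset A)) x"
    proof (cases "x \<in># A")
      case True
      hence "0 < count A x" by simp
      moreover have "count (mset_set (set_mset A)) x = 1" using True by simp
      ultimately show ?thesis using c by linarith
    next
      case False
      thus ?thesis by (simp add: not_in_iff)
    qed
  qed
qed

lemma size_set_mset: "size A = card (set_mset A) \<Longrightarrow> A = mset_set (set_mset A)"
proof -
  assume s: "size A = card (set_mset A)"
  have sub: "mset_set (set_mset A) \<subseteq># A"
    apply (rule mset_subset_eqI)
    subgoal for a
    proof (cases "a \<in># A")
      case True
      hence "0 < count A a" by simp
      thus ?thesis using True by simp
    next
      case False thus ?thesis by simp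
    qed
    done
  show ?thesis
  proof (rule ccontr)
    assume "A \<noteq> mset_set (set_mset A)"
    hence "mset_set (set_mset A) \<subset># A" using sub by (simp add: subset_mset.less_le)
    hence "size (mset_set (set_mset A)) < size A" by (rule mset_subset_size)
    thus False using s by simp
  qed
qed

lemma matching:
  "image_mset fst A = image_mset fst B \<Longrightarrow> (\<forall>x. count (image_mset snd A) x \<le> 1)
   \<Longrightarrow> \<exists>\<sigma>. image_mset (\<lambda>(a,x). (a, \<sigma> x)) A = B"
proof (induction A arbitrary: B)
  case empty
  then show ?case by simp
next
  case (add ax A)
  obtain a x where ax: "ax = (a,x)" by fastforce
  have "a \<in># image_mset fst B" using add.prems(1) ax by (metis image_mset_add_mset fst_conv union_single_eq_member)
  then obtain c where c: "(a,c) \<in># B" by force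
  define B0 where "B0 = B - {#(a,c)#}"
  have B: "B = add_mset (a,c) B0" using c by (simp add: B0_def)
  have "image_mset fst A = image_mset fst B0" using add.prems(1) ax B by simp
  moreover have "\<forall>x. count (image_mset snd A) x \<le> 1"
  proof
    fix y show "count (image_mset snd A) y \<le> 1"
      using add.prems(2)[rule_format, of y] ax by (auto split: if_splits)
  qed
  ultimately obtain \<sigma> where \<sigma>: "image_mset (\<lambda>(a,x). (a, \<sigma> x)) A = B0" using add.IH by blast
  have "count (image_mset snd A) x = 0"
    using add.prems(2)[rule_format, of x] ax by simp
  hence xn: "x \<notin># image_mset snd A" by (simp add: count_eq_zero_iff)
  have "image_mset (\<lambda>(a,y). (a, (\<sigma>(x := c)) y)) A = image_mset (\<lambda>(a,x). (a, \<sigma> x)) A"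
    using xn by (intro image_mset_cong) force
  thus ?case using \<sigma> B ax by (intro exI[of _ "\<sigma>(x := c)"]) simp
qed

lemma rev_enc_simps:
  "ctrans (rev_cnet (enc N vs)) = Fwd ` trans N \<union> Bwd ` trans N"
  "cpre (rev_cnet (enc N vs)) (Fwd t) = enc_pre vs t"
  "cpost (rev_cnet (enc N vs)) (Fwd t) = post_col N t (mset_to_fset (enc_pre vs t))"
  "cpre (rev_cnet (enc N vs)) (Bwd t) = post_col N t (mset_to_fset (enc_pre vs t))"
  "cpost (rev_cnet (enc N vs)) (Bwd t) = enc_pre vs t"
  by (simp_all add: rev_cnet_def enc_def)

lemma msubst_post_enc:
  "msubst \<sigma> (post_col N t (mset_to_fset (enc_pre vs t))) = post_col N t (mset_to_fset (msubst \<sigma> (enc_pre vs t)))"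
  by (simp add: msubst_post_col mset_to_fset_msubst)

lemma fst_msubst_enc:
  "valid_vars N vs \<Longrightarrow> t \<in> trans N \<Longrightarrow> image_mset fst (msubst \<sigma> (enc_pre vs t)) = pre N t"
  by (auto simp: msubst_enc_pre valid_vars_def multiset.map_comp comp_def case_prod_beta)

lemma c2p_step:
  assumes I: "Inv N m M1 C" and w: "wf_ptnet N" and vv: "valid_vars N vs"
    and cf: "cfire (rev_cnet (enc N vs)) M1 u \<sigma> M2"
  shows "ptfire (rev_ptnet (unfold_net N m)) M1 (clabel (enc N vs) u \<sigma>) M2"
proof -
  from cf obtain m3 where tr: "u \<in> Fwd ` trans N \<union> Bwd ` trans N"
    and e1: "M1 = msubst \<sigma> (cpre (rev_cnet (enc N vs)) u) + m3"
    and e2: "M2 = msubst \<sigma> (cpost (rev_cnet (enc N vs)) u) + m3"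
    by (auto simp: cfire_def rev_enc_simps)
  have fin: "finite C" and Mc: "M1 = mset_set (cutS N m C)" using I by (auto simp: Inv_def)
  have fc: "finite (cutS N m C)" using fin by (rule finite_cutS)
  from tr obtain t where t: "t \<in> trans N" and u: "u = Fwd t \<or> u = Bwd t" by auto
  define A where "A = msubst \<sigma> (enc_pre vs t)"
  define H where "H = mset_to_fset A"
  have fH: "fset H = set_mset A" by (simp add: H_def)
  have fstA: "image_mset fst A = pre N t" unfolding A_def using vv t by (rule fst_msubst_enc)
  have lab: "clabel (enc N vs) (Fwd t) \<sigma> = Fwd (t,H)" "clabel (enc N vs) (Bwd t) \<sigma> = Bwd (t,H)"
    by (simp_all add: clabel_def enc_def A_def H_def)
  from u show ?thesis
  proof
    assume u: "u = Fwd t"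
    have M1: "M1 = A + m3" and M2: "M2 = post_col N t H + m3"
      using e1 e2 u by (simp_all add: rev_enc_simps A_def H_def msubst_post_enc)
    have "A \<subseteq># mset_set (cutS N m C)" using M1 Mc by simp
    hence AH: "A = mset_set (fset H)" using fc fH sub_set_mset by metis
    have Acut: "set_mset A \<subseteq> cutS N m C" using M1 Mc fc
      by (metis Un_iff set_mset_union finite_set_mset_mset_set subsetI)
    have "(t,H) \<in> utransitions N m"
    proof (rule uplaces_utransitions.trn[OF t])
      show "\<forall>p\<in>fset H. p \<in> uplaces N m" using Acut Inv_uplaces[OF I] fH by blast
      show "UCO N (Inl ` fset H)" using cut_co[OF I] Acut fH by simp
      show "image_mset fst (mset_set (fset H)) = pre N t" using AH fstA by simp
    qed
    thus ?thesis using M1 M2 AH u lab by (simp add: ptfire_def rev_unf_simps)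
  next
    assume u: "u = Bwd t"
    have M1: "M1 = post_col N t H + m3" and M2: "M2 = A + m3"
      using e1 e2 u by (simp_all add: rev_enc_simps A_def H_def msubst_post_enc)
    have "(t,H) \<in> C" using Inv_bwd_in[OF I t w] M1 by simp
    hence tH: "(t,H) \<in> utransitions N m" using I by (auto simp: Inv_def)
    hence "image_mset fst (mset_set (fset H)) = pre N t" by (auto elim: utransitions.cases)
    hence "size (mset_set (fset H)) = size A" using fstA by (metis size_image_mset)
    hence "size A = card (set_mset A)" using fH by simp
    hence AH: "A = mset_set (fset H)" using fH size_set_mset by metis
    show ?thesis using M1 M2 AH u lab tH by (simp add: ptfire_def rev_unf_simps)
  qed
qed

lemma p2c_step:
  assumes I: "Inv N m M1 C" and I2: "Inv N m M2 C'" and vv: "valid_vars N vs"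
    and pf: "ptfire (rev_ptnet (unfold_net N m)) M1 v M2"
  shows "\<exists>u \<sigma>. cfire (rev_cnet (enc N vs)) M1 u \<sigma> M2 \<and> clabel (enc N vs) u \<sigma> = v"
proof -
  from pf obtain m3 where tr: "v \<in> Fwd ` utransitions N m \<union> Bwd ` utransitions N m"
    and e1: "M1 = pre (rev_ptnet (unfold_net N m)) v + m3"
    and e2: "M2 = post (rev_ptnet (unfold_net N m)) v + m3"
    by (auto simp: ptfire_def rev_unf_simps)
  from tr obtain t H where tH: "(t,H) \<in> utransitions N m" and v: "v = Fwd (t,H) \<or> v = Bwd (t,H)"
    by auto
  have t: "t \<in> trans N" using tH by (rule utrans_trans)
  have "image_mset fst (mset_set (fset H)) = pre N t" using tH by (auto elim: utransitions.cases)
  moreover have "image_mset fst (vs t) = pre N t" "\<forall>x. count (image_mset snd (vs t)) x \<le> 1"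
    using vv t by (auto simp: valid_vars_def)
  ultimately obtain \<sigma>0 where s0: "image_mset (\<lambda>(a,x). (a, \<sigma>0 x)) (vs t) = mset_set (fset H)"
    using matching[of "vs t" "mset_set (fset H)"] by auto
  define \<sigma> where "\<sigma> = (\<lambda>x. Some (\<sigma>0 x))"
  have A: "msubst \<sigma> (enc_pre vs t) = mset_set (fset H)"
    unfolding msubst_enc_pre \<sigma>_def using s0 by simp
  have lab: "clabel (enc N vs) (Fwd t) \<sigma> = Fwd (t,H)" "clabel (enc N vs) (Bwd t) \<sigma> = Bwd (t,H)"
    by (simp_all add: clabel_def enc_def A mset_to_fset_mset_set)
  have P: "msubst \<sigma> (post_col N t (mset_to_fset (enc_pre vs t))) = post_col N t H"
    by (simp add: msubst_post_enc A mset_to_fset_mset_set)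
  have g: "ground M1" "ground M2" using I I2 by (auto intro: Inv_ground)
  from v show ?thesis
  proof
    assume v: "v = Fwd (t,H)"
    have "cfire (rev_cnet (enc N vs)) M1 (Fwd t) \<sigma> M2"
      using e1 e2 v g t A P by (auto simp: cfire_def rev_enc_simps rev_unf_simps)
    thus ?thesis using lab v by blast
  next
    assume v: "v = Bwd (t,H)"
    have "cfire (rev_cnet (enc N vs)) M1 (Bwd t) \<sigma> M2"
      using e1 e2 v g t A P by (auto simp: cfire_def rev_enc_simps rev_unf_simps)
    thus ?thesis using lab v by blast
  qed
qed

lemma c2p:
  assumes w: "wf_ptnet N" and vv: "valid_vars N vs"
  shows "creach (enc N vs) M0 s M \<Longrightarrow> M0 = enc_marking m \<Longrightarrow>
    ptreach (rev_ptnet (unfold_net N m)) M0 s M \<and> (\<exists>C. Inv N m M C)"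
proof (induction rule: creach.induct)
  case (refl M)
  then show ?case using Inv_init by (blast intro: ptreach.refl)
next
  case (step M s M1 u \<sigma> M2)
  then obtain C where I: "Inv N m M1 C" and r: "ptreach (rev_ptnet (unfold_net N m)) M s M1" by blast
  have f: "ptfire (rev_ptnet (unfold_net N m)) M1 (clabel (enc N vs) u \<sigma>) M2"
    using c2p_step[OF I w vv step.hyps(2)] .
  show ?case using ptreach.step[OF r f] Inv_step[OF I w f] by blast
qed

lemma p2c:
  assumes w: "wf_ptnet N" and vv: "valid_vars N vs"
  shows "ptreach (rev_ptnet (unfold_net N m)) M0 s M \<Longrightarrow> M0 = enc_marking m \<Longrightarrow>
    creach (enc N vs) M0 s M \<and> (\<exists>C. Inv N m M C)"
proof (induction rule: ptreach.induct)
  case (refl M)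
  then show ?case using Inv_init by (blast intro: creach.refl)
next
  case (step M s M1 v M2)
  then obtain C where I: "Inv N m M1 C" and r: "creach (enc N vs) M s M1" by blast
  obtain C' where I2: "Inv N m M2 C'" using Inv_step[OF I w step.hyps(2)] by blast
  obtain u \<sigma> where cf: "cfire (rev_cnet (enc N vs)) M1 u \<sigma> M2" and l: "clabel (enc N vs) u \<sigma> = v"
    using p2c_step[OF I I2 vv step.hyps(2)] by blast
  show ?case using creach.step[OF r cf] l I2 by blast
qed

theorem mainTheorem15:
  fixes N :: "('s, 't) ptnet" and m :: "'s multiset"
    and vs :: "'t \<Rightarrow> ('s \<times> nat) multiset"
    and s :: "('s, 't) utrans rt list" and m'' :: "('s \<times> ('s, 't) col) multiset"
  assumes "wf_ptnet N" and "marking_of N m" and "valid_vars N vs"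
  shows "creach (enc N vs) (enc_marking m) s m''
     \<longleftrightarrow> ptreach (rev_ptnet (unfold_net N m)) (unfold_marking m) s m''"
  using c2p[OF assms(1,3)] p2c[OF assms(1,3)] by (auto simp: unfold_marking_def)

end
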